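(* Let $S$ be a densely defined symmetric operator on a Hilbert space $\mathcal{H}$ and $V\ge0$ a bounded everywhere defined non-negative operator. Let $\mathcal{V}\subset\mathcal{D}(S^* )$ be a subspace with $\mathcal{V}\cap\mathcal{D}(S)=\{0\}$, let $\mathcal{L}:\mathcal{V}\to\mathcal{H}$ be linear, let $S_{\mathcal{V},\mathcal{L}}$ be the operator with domain $\mathcal{D}(S)\dot{+}\mathcal{V}$ acting by $f+v\mapsto S^*(f+v)+\mathcal{L}v$, and let $S_{\mathcal{V}}:=S_{\mathcal{V},0}=S^*\upharpoonright_{\mathcal{D}(S)\dot{+}\mathcal{V}}$. (i) If $S_{\mathcal{V}}$ is symmetric, then $S_{\mathcal{V}}+iV$ is the only dissipative extension of $S+iV$ with domain equal to $\mathcal{D}(S_{\mathcal{V}})$. Moreover, if $\mathcal{L}\neq0$, there is no $\gamma\in\mathbb{R}^+$ such that $\mathrm{Im}\langle\psi,(S_{\mathcal{V},\mathcal{L}}+iV)\psi\rangle\ge-\gamma\|\psi\|^2$ for all $\psi\in\mathcal{D}(S_{\mathcal{V},\mathcal{L}})$. (ii) If there exists $v\in\mathcal{V}$ with $\mathrm{Im}\langle v,S_{\mathcal{V}}v\rangle<0$, then there exists no linear $\mathcal{L}:\mathcal{V}\to\mathcal{H}$ and no bounded non-negative operator $V\ge0$ such that $S_{\mathcal{V},\mathcal{L}}+iV$ is dissipative. (iii) If there exists $\varepsilon>0$ such that $\mathrm{Im}\langle v,S_{\mathcal{V}}v\rangle\ge\varepsilon\|v\|^2$ for all $v\in\mathcal{V}$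 and $\mathcal{L}$ is bounded, then $$\mathrm{Im}\langle\psi,S_{\mathcal{V},\mathcal{L}}\psi\rangle\ge-\frac{\|\mathcal{L}\|^2}{4\varepsilon}\|\psi\|^2\quad\text{for all }\psi\in\mathcal{D}(S_{\mathcal{V},\mathcal{L}}).$$ In particular, for any bounded $V\ge\frac{\|\mathcal{L}\|^2}{4\varepsilon}$ we get $\mathrm{Im}\langle\psi,(S_{\mathcal{V},\mathcal{L}}+iV)\psi\rangle\ge0$ for all $\psi\in\mathcal{D}(S_{\mathcal{V},\mathcal{L}})$.
   Context: The inner product is antilinear in the first argument. A densely defined operator $B$ is dissipative if $\mathrm{Im}\langle\psi,B\psi\rangle\ge0$ for all $\psi\in\mathcal{D}(B)$. An extension of $S+iV$ means an operator extending $S+iV$ defined on $\mathcal{D}(S)$. *)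

theory Defs
  imports "HOL-Analysis.Analysis"
begin

text \<open>Complex inner product spaces (the library only has real inner product spaces).
  The inner product is antilinear in the first argument and linear in the second;
  the norm is the one induced by the inner product.  A complex Hilbert space is a
  type of class complex_inner that is also a complete_space.\<close>

class complex_inner = real_normed_vector +
  fixes scaleC :: "complex \<Rightarrow> 'a \<Rightarrow> 'a" (infixr "*\<^sub>C" 75)
    and cinner :: "'a \<Rightarrow> 'a \<Rightarrow> complex"
  assumes scaleC_add_right: "a *\<^sub>C (x + y) = a *\<^sub>C x + a *\<^sub>C y"
    and scaleC_add_left: "(a + b) *\<^sub>C x = a *\<^sub>C x + b *\<^sub>C x"
    and scaleC_scaleC: "a *\<^sub>C (b *\<^sub>C x) = (a * b) *\<^sub>C x"
    and scaleC_one: "1 *\<^sub>C x = x"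
    and scaleR_scaleC: "scaleR r x = complex_of_real r *\<^sub>C x"
    and cinner_add_right: "cinner x (y + z) = cinner x y + cinner x z"
    and cinner_scaleC_right: "cinner x (a *\<^sub>C y) = a * cinner x y"
    and cinner_commute: "cinner y x = cnj (cinner x y)"
    and cinner_self_norm: "cinner x x = complex_of_real ((norm x)\<^sup>2)"

definition csubspace :: "'a::complex_inner set \<Rightarrow> bool" where
  "csubspace U \<longleftrightarrow> 0 \<in> U \<and> (\<forall>x\<in>U. \<forall>y\<in>U. x + y \<in> U) \<and> (\<forall>c. \<forall>x\<in>U. c *\<^sub>C x \<in> U)"

definition clinear_on :: "'a::complex_inner set \<Rightarrow> ('a \<Rightarrow> 'b::complex_inner) \<Rightarrow> bool" where
  "clinear_on U f \<longleftrightarrow> (\<forall>x\<in>U. \<forall>y\<in>U. f (x + y) = f x + f y) \<and>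
                       (\<forall>c. \<forall>x\<in>U. f (c *\<^sub>C x) = c *\<^sub>C f x)"

text \<open>A (possibly unbounded) operator is represented by its domain D and its action A
  (values of A outside D are irrelevant).\<close>

definition densely_defined :: "'a::complex_inner set \<Rightarrow> bool" where
  "densely_defined D \<longleftrightarrow> closure D = UNIV"

definition symmetric_op :: "'a::complex_inner set \<Rightarrow> ('a \<Rightarrow> 'a) \<Rightarrow> bool" where
  "symmetric_op D A \<longleftrightarrow> densely_defined D \<and>
     (\<forall>x\<in>D. \<forall>y\<in>D. cinner (A x) y = cinner x (A y))"

definition dissipative_op :: "'a::complex_inner set \<Rightarrow> ('a \<Rightarrow> 'a) \<Rightarrow> bool" where
  "dissipative_op D B \<longleftrightarrow> (\<forall>\<psi>\<in>D. Im (cinner \<psi> (B \<psi>)) \<ge> 0)"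

definition adj_dom :: "'a::complex_inner set \<Rightarrow> ('a \<Rightarrow> 'a) \<Rightarrow> 'a set" where
  "adj_dom D S = {y. \<exists>z. \<forall>x\<in>D. cinner (S x) y = cinner x z}"

definition adj :: "'a::complex_inner set \<Rightarrow> ('a \<Rightarrow> 'a) \<Rightarrow> 'a \<Rightarrow> 'a" where
  "adj D S y = (THE z. \<forall>x\<in>D. cinner (S x) y = cinner x z)"

definition bounded_op :: "('a::complex_inner \<Rightarrow> 'a) \<Rightarrow> bool" where
  "bounded_op V \<longleftrightarrow> clinear_on UNIV V \<and> (\<exists>K. \<forall>x. norm (V x) \<le> K * norm x)"

definition op_ge :: "('a::complex_inner \<Rightarrow> 'a) \<Rightarrow> real \<Rightarrow> bool" where
  "op_ge V c \<longleftrightarrow> (\<forall>x. Im (cinner x (V x)) = 0 \<and> Re (cinner x (V x)) \<ge> c * (norm x)\<^sup>2)"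

definition opnorm_on :: "'a::complex_inner set \<Rightarrow> ('a \<Rightarrow> 'a) \<Rightarrow> real" where
  "opnorm_on U L = Inf {K. K \<ge> 0 \<and> (\<forall>v\<in>U. norm (L v) \<le> K * norm v)}"

text \<open>The operator S_{V,L}: domain D(S) + V (direct sum), f + v \<mapsto> S*(f+v) + L v.\<close>

definition ext_dom :: "'a::complex_inner set \<Rightarrow> 'a set \<Rightarrow> 'a set" where
  "ext_dom D Vs = {f + v | f v. f \<in> D \<and> v \<in> Vs}"

definition ext_op :: "'a::complex_inner set \<Rightarrow> ('a \<Rightarrow> 'a) \<Rightarrow> 'a set \<Rightarrow> ('a \<Rightarrow> 'a) \<Rightarrow> 'a \<Rightarrow> 'a" where
  "ext_op D S Vs L \<psi> = adj D S \<psi> + L (THE v. v \<in> Vs \<and> \<psi> - v \<in> D)"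

end

theory Submission
  imports Defs
begin

context fixes dummy :: "'a::complex_inner" begin end

lemma cinner_add_left: "cinner (x + y) z = cinner x z + cinner (y::'a::complex_inner) z"
  by (metis cinner_commute cinner_add_right complex_cnj_add)

lemma cinner_zero_right[simp]: "cinner (x::'a::complex_inner) 0 = 0"
  using cinner_add_right[of x 0 0] by simp

lemma cinner_zero_left[simp]: "cinner 0 (x::'a::complex_inner) = 0"
  by (metis cinner_commute cinner_zero_right complex_cnj_zero)

lemma cinner_minus_right: "cinner (x::'a::complex_inner) (- y) = - cinner x y"
  using cinner_add_right[of x y "-y"] by (simp add: add_eq_0_iff2)

lemma cinner_diff_right: "cinner (x::'a::complex_inner) (y - z) = cinner x y - cinner x z"
  using cinner_add_right[of x y "-z"] by (simp add: cinner_minus_right)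

lemma cinner_minus_left: "cinner (- x) (y::'a::complex_inner) = - cinner x y"
  by (metis cinner_commute cinner_minus_right complex_cnj_minus)

lemma cinner_diff_left: "cinner (x - y) (z::'a::complex_inner) = cinner x z - cinner y z"
  using cinner_add_left[of x "-y" z] by (simp add: cinner_minus_left)

lemma cinner_scaleC_left: "cinner (a *\<^sub>C x) (y::'a::complex_inner) = cnj a * cinner x y"
  by (metis cinner_commute cinner_scaleC_right complex_cnj_mult complex_cnj_cnj)

lemma cinner_scaleR_left: "cinner (r *\<^sub>R x) (y::'a::complex_inner) = of_real r * cinner x y"
  by (simp add: scaleR_scaleC cinner_scaleC_left)

lemma Re_cinner_self: "Re (cinner x (x::'a::complex_inner)) = (norm x)\<^sup>2"
  by (simp add: cinner_self_norm)

lemma norm_scaleC: "norm (a *\<^sub>C (x::'a::complex_inner)) = cmod a * norm x"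
proof -
  have "complex_of_real ((norm (a *\<^sub>C x))\<^sup>2) = cnj a * a * complex_of_real ((norm x)\<^sup>2)"
    by (metis cinner_self_norm cinner_scaleC_left cinner_scaleC_right mult.assoc)
  also have "cnj a * a = complex_of_real ((cmod a)\<^sup>2)"
    by (metis complex_norm_square mult.commute)
  finally have "(norm (a *\<^sub>C x))\<^sup>2 = (cmod a * norm x)\<^sup>2"
    by (metis of_real_eq_iff of_real_mult power_mult_distrib)
  then show ?thesis by (simp add: power2_eq_iff_nonneg)
qed

lemma Re_cinner_le: "Re (cinner x (y::'a::complex_inner)) \<le> norm x * norm y"
proof -
  have "cinner (x+y) (x+y) = cinner x x + cinner x y + cinner y x + cinner y y"
    by (simp add: cinner_add_left cinner_add_right)
  then have "Re (cinner (x+y) (x+y)) = Re (cinner x x) + 2 * Re (cinner x y) + Re (cinner y y)"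
    by (simp add: cinner_commute[of y x])
  then have e: "(norm (x+y))\<^sup>2 = (norm x)\<^sup>2 + 2 * Re (cinner x y) + (norm y)\<^sup>2"
    by (simp add: Re_cinner_self)
  have "(norm (x+y))\<^sup>2 \<le> (norm x + norm y)\<^sup>2"
    by (simp add: norm_triangle_ineq power_mono)
  with e show ?thesis by (simp add: power2_sum)
qed

lemma Im_cinner_le: "Im (cinner x (y::'a::complex_inner)) \<le> norm x * norm y"
proof -
  have "Im (cinner x y) = Re (cinner (\<i> *\<^sub>C x) y)" by (simp add: cinner_scaleC_left)
  also have "\<dots> \<le> norm x * norm y" using Re_cinner_le[of "\<i> *\<^sub>C x" y] by (simp add: norm_scaleC)
  finally show ?thesis .
qed

lemma Im_cinner_ge: "- (norm x * norm y) \<le> Im (cinner x (y::'a::complex_inner))"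
proof -
  have "- Im (cinner x y) = Re (cinner ((-\<i>) *\<^sub>C x) y)" by (simp add: cinner_scaleC_left)
  also have "\<dots> \<le> norm x * norm y" using Re_cinner_le[of "(-\<i>) *\<^sub>C x" y] by (simp add: norm_scaleC)
  finally show ?thesis by simp
qed

lemma Re_cinner_ge: "- (norm x * norm y) \<le> Re (cinner x (y::'a::complex_inner))"
  using Re_cinner_le[of "-x" y] by (simp add: cinner_minus_left)

lemma cont_Re_cinner: "continuous_on UNIV (\<lambda>y. Re (cinner y (w::'a::complex_inner)))"
proof -
  have "bounded_linear (\<lambda>y. Re (cinner y w))"
  proof (rule bounded_linear_intro[where K="norm w"])
    show "\<And>x y. Re (cinner (x + y) w) = Re (cinner x w) + Re (cinner y w)"
      by (simp add: cinner_add_left)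
    show "\<And>r x. Re (cinner (r *\<^sub>R x) w) = r *\<^sub>R Re (cinner x w)"
      by (simp add: cinner_scaleR_left)
    show "\<And>x. norm (Re (cinner x w)) \<le> norm x * norm w"
      by (simp add: abs_le_iff) (metis Re_cinner_le Re_cinner_ge minus_le_iff)
  qed
  then show ?thesis by (simp add: linear_continuous_on)
qed

lemma cont_Im_cinner: "continuous_on UNIV (\<lambda>y. Im (cinner y (w::'a::complex_inner)))"
proof -
  have "bounded_linear (\<lambda>y. Im (cinner y w))"
  proof (rule bounded_linear_intro[where K="norm w"])
    show "\<And>x y. Im (cinner (x + y) w) = Im (cinner x w) + Im (cinner y w)"
      by (simp add: cinner_add_left)
    show "\<And>r x. Im (cinner (r *\<^sub>R x) w) = r *\<^sub>R Im (cinner x w)"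
      by (simp add: cinner_scaleR_left)
    show "\<And>x. norm (Im (cinner x w)) \<le> norm x * norm w"
      by (simp add: abs_le_iff) (metis Im_cinner_le Im_cinner_ge minus_le_iff)
  qed
  then show ?thesis by (simp add: linear_continuous_on)
qed

lemma dense_lemma:
  fixes D :: "'a::complex_inner set" and h :: "'a \<Rightarrow> real"
  assumes "closure D = UNIV" "continuous_on UNIV h" "h x < 0"
  shows "\<exists>f\<in>D. h (f + v) < 0"
proof -
  let ?U = "{y. h (y + v) < 0}"
  have "continuous_on UNIV (h \<circ> (\<lambda>y. y + v))"
    by (rule continuous_on_compose) (auto intro: continuous_intros continuous_on_subset[OF assms(2)])
  then have "open ?U" using open_Collect_less[of "h \<circ> (\<lambda>y. y + v)" "\<lambda>_. 0"]
    by (simp add: o_def continuous_on_const)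
  moreover have "x - v \<in> ?U" using assms(3) by simp
  moreover have "?U \<inter> closure D \<noteq> {}" using \<open>x - v \<in> ?U\<close> assms(1) by blast
  ultimately have "?U \<inter> D \<noteq> {}" using open_Int_closure_eq_empty[of ?U D] by blast
  then show ?thesis by blast
qed

lemma minus_scaleC: "- (x::'a::complex_inner) = (-1) *\<^sub>C x"
  using scaleR_scaleC[of "-1" x] by simp

lemma csubspace_diff: "csubspace U \<Longrightarrow> x \<in> U \<Longrightarrow> y \<in> U \<Longrightarrow> x - y \<in> U"
  unfolding csubspace_def by (metis minus_scaleC diff_conv_add_uminus)

lemma adj_unique:
  fixes D :: "'a::complex_inner set"
  assumes "closure D = UNIV" "\<forall>x\<in>D. cinner x z1 = cinner x z2"
  shows "z1 = z2"
proof (rule ccontr)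
  assume ne: "z1 \<noteq> z2"
  let ?z = "z1 - z2"
  have z0: "\<forall>x\<in>D. cinner x ?z = 0" using assms(2) by (simp add: cinner_diff_right)
  have "?z \<noteq> 0" using ne by simp
  then have "(\<lambda>y. - Re (cinner y ?z)) ?z < 0" by (simp add: Re_cinner_self)
  moreover have "continuous_on UNIV (\<lambda>y. - Re (cinner y ?z))"
    using cont_Re_cinner[of ?z] by (auto intro: continuous_intros)
  ultimately obtain f where "f \<in> D" "- Re (cinner (f + 0) ?z) < 0"
    using dense_lemma[OF assms(1), of "\<lambda>y. - Re (cinner y ?z)" ?z 0] by blast
  with z0 show False by simp
qed

lemma adj_eq:
  fixes D :: "'a::complex_inner set"
  assumes "closure D = UNIV" "\<forall>x\<in>D. cinner (S x) y = cinner x z"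
  shows "adj D S y = z"
  unfolding adj_def
proof (rule the_equality)
  show "\<forall>x\<in>D. cinner (S x) y = cinner x z" by fact
  fix z' assume "\<forall>x\<in>D. cinner (S x) y = cinner x z'"
  with assms show "z' = z" by (intro adj_unique[OF assms(1)]) auto
qed

lemma adj_prop:
  fixes D :: "'a::complex_inner set"
  assumes "closure D = UNIV" "y \<in> adj_dom D S"
  shows "\<forall>x\<in>D. cinner (S x) y = cinner x (adj D S y)"
proof -
  obtain z where z: "\<forall>x\<in>D. cinner (S x) y = cinner x z" using assms(2) unfolding adj_dom_def by blast
  with adj_eq[OF assms(1) z] show ?thesis by simp
qed

lemma adj_sum:
  fixes D :: "'a::complex_inner set"
  assumes "symmetric_op D S" "f \<in> D" "v \<in> adj_dom D S"
  shows "adj D S (f + v) = S f + adj D S v"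
proof -
  have cl: "closure D = UNIV" using assms(1) unfolding symmetric_op_def densely_defined_def by blast
  show ?thesis
  proof (rule adj_eq[OF cl], intro ballI)
    fix x assume x: "x \<in> D"
    have "cinner (S x) (f + v) = cinner (S x) f + cinner (S x) v" by (simp add: cinner_add_right)
    also have "\<dots> = cinner x (S f) + cinner x (adj D S v)"
      using assms x adj_prop[OF cl assms(3)] unfolding symmetric_op_def by auto
    finally show "cinner (S x) (f + v) = cinner x (S f + adj D S v)" by (simp add: cinner_add_right)
  qed
qed

lemma the_v:
  fixes D :: "'a::complex_inner set"
  assumes "csubspace D" "csubspace Vs" "Vs \<inter> D = {0}" "f \<in> D" "v \<in> Vs"
  shows "(THE v'. v' \<in> Vs \<and> f + v - v' \<in> D) = v"
proof (rule the_equality)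
  show "v \<in> Vs \<and> f + v - v \<in> D" using assms by simp
  fix v' assume h: "v' \<in> Vs \<and> f + v - v' \<in> D"
  have "v - v' \<in> Vs" using h assms csubspace_diff by blast
  moreover have "v - v' = (f + v - v') - f" by simp
  then have "v - v' \<in> D" using h assms csubspace_diff by metis
  ultimately have "v - v' = 0" using assms(3) by blast
  then show "v' = v" by simp
qed

lemma Im_adj:
  fixes D :: "'a::complex_inner set"
  assumes "symmetric_op D S" "f \<in> D" "v \<in> adj_dom D S"
  shows "Im (cinner (f + v) (adj D S (f + v))) = Im (cinner v (adj D S v))"
proof -
  have cl: "closure D = UNIV" using assms(1) unfolding symmetric_op_def densely_defined_def by blast
  have s1: "cinner (S f) f = cinner f (S f)" using assms unfolding symmetric_op_def by blast
  then have "cnj (cinner f (S f)) = cinner f (S f)" by (metis cinner_commute)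
  then have "Im (cnj (cinner f (S f))) = Im (cinner f (S f))" by simp
  then have r1: "Im (cinner f (S f)) = 0" by simp
  have s2: "cinner (S f) v = cinner f (adj D S v)" using adj_prop[OF cl assms(3)] assms(2) by blast
  have "cinner (f + v) (adj D S (f + v)) = cinner f (S f) + cinner f (adj D S v) + cinner v (S f) + cinner v (adj D S v)"
    by (simp add: adj_sum[OF assms] cinner_add_left cinner_add_right)
  also have "cinner v (S f) = cnj (cinner f (adj D S v))" using s2 by (metis cinner_commute)
  finally show ?thesis using r1 by simp
qed

lemma dense_w:
  fixes D :: "'a::complex_inner set"
  assumes cl: "closure D = UNIV" and h: "\<forall>f\<in>D. C * (norm (f + v))\<^sup>2 + Im (cinner (f + v) w) \<ge> 0"
  shows "w = 0"
proof (rule ccontr)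
  assume w: "w \<noteq> 0"
  define s where "s = 1 / (2 * (\<bar>C\<bar> + 1))"
  have s0: "s > 0" unfolding s_def by (simp add: add_pos_nonneg)
  have "\<bar>C\<bar> * s < 1" unfolding s_def by (simp add: field_simps)
  then have Cs: "C * s < 1" by (smt (verit) mult_right_mono s0 abs_ge_self)
  let ?x = "(\<i> * of_real s) *\<^sub>C w"
  let ?h = "\<lambda>y. C * (norm y)\<^sup>2 + Im (cinner y w)"
  have nw: "norm w > 0" using w by simp
  have "?h ?x = C * s\<^sup>2 * (norm w)\<^sup>2 - s * (norm w)\<^sup>2"
    using s0 by (simp add: norm_scaleC cinner_scaleC_left cinner_self_norm power_mult_distrib norm_mult)
  also have "\<dots> = s * (norm w)\<^sup>2 * (C * s - 1)" by (simp add: algebra_simps power2_eq_square)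
  also have "\<dots> < 0" using s0 nw Cs by (simp add: mult_pos_neg)
  finally have "?h ?x < 0" .
  moreover have "continuous_on UNIV ?h"
    by (intro continuous_on_add continuous_on_mult continuous_on_const continuous_on_power
          continuous_on_norm continuous_on_id cont_Im_cinner)
  ultimately obtain f where "f \<in> D" "?h (f + v) < 0"
    using dense_lemma[OF cl, of ?h ?x v] by blast
  with h show False by fastforce
qed

lemma Re_V_le:
  assumes "bounded_op V"
  shows "\<exists>K. \<forall>x. Re (cinner x (V x)) \<le> K * (norm x)\<^sup>2"
proof -
  obtain K where K: "\<forall>x. norm (V x) \<le> K * norm x" using assms unfolding bounded_op_def by blast
  have "Re (cinner x (V x)) \<le> K * (norm x)\<^sup>2" for x
  proof -
    have "Re (cinner x (V x)) \<le> norm x * norm (V x)" by (rule Re_cinner_le)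
    also have "\<dots> \<le> norm x * (K * norm x)" using K by (simp add: mult_left_mono)
    finally show ?thesis by (simp add: power2_eq_square mult.commute mult.left_commute)
  qed
  then show ?thesis by blast
qed

theorem corollary6p5:
  fixes D :: "'a::{complex_inner, complete_space} set"
    and S :: "'a \<Rightarrow> 'a"
    and V :: "'a \<Rightarrow> 'a"
    and Vs :: "'a set"
    and L :: "'a \<Rightarrow> 'a"
  assumes S_dom: "csubspace D"
    and S_lin: "clinear_on D S"
    and S_sym: "symmetric_op D S"
    and V_bdd: "bounded_op V"
    and V_nonneg: "op_ge V 0"
    and Vs_sub: "csubspace Vs"
    and Vs_adj: "Vs \<subseteq> adj_dom D S"
    and Vs_int: "Vs \<inter> D = {0}"
    and L_lin: "clinear_on Vs L"
  shows
    "(symmetric_op (ext_dom D Vs) (ext_op D S Vs (\<lambda>_. 0)) \<longrightarrow>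
        (dissipative_op (ext_dom D Vs) (\<lambda>\<psi>. ext_op D S Vs (\<lambda>_. 0) \<psi> + \<i> *\<^sub>C V \<psi>)
         \<and> (\<forall>B. clinear_on (ext_dom D Vs) B
                \<and> (\<forall>f\<in>D. B f = S f + \<i> *\<^sub>C V f)
                \<and> dissipative_op (ext_dom D Vs) B
                \<longrightarrow> (\<forall>\<psi>\<in>ext_dom D Vs. B \<psi> = ext_op D S Vs (\<lambda>_. 0) \<psi> + \<i> *\<^sub>C V \<psi>)))
        \<and> ((\<exists>v\<in>Vs. L v \<noteq> 0) \<longrightarrow>
             \<not> (\<exists>\<gamma>>0. \<forall>\<psi>\<in>ext_dom D Vs.
                   Im (cinner \<psi> (ext_op D S Vs L \<psi> + \<i> *\<^sub>C V \<psi>)) \<ge> - \<gamma> * (norm \<psi>)\<^sup>2)))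
     \<and> ((\<exists>v\<in>Vs. Im (cinner v (ext_op D S Vs (\<lambda>_. 0) v)) < 0) \<longrightarrow>
        (\<forall>L' V'. clinear_on Vs L' \<and> bounded_op V' \<and> op_ge V' 0 \<longrightarrow>
           \<not> dissipative_op (ext_dom D Vs) (\<lambda>\<psi>. ext_op D S Vs L' \<psi> + \<i> *\<^sub>C V' \<psi>)))
     \<and> (\<forall>\<epsilon>>0. (\<forall>v\<in>Vs. Im (cinner v (ext_op D S Vs (\<lambda>_. 0) v)) \<ge> \<epsilon> * (norm v)\<^sup>2)
          \<and> (\<exists>K. \<forall>v\<in>Vs. norm (L v) \<le> K * norm v) \<longrightarrow>
          (\<forall>\<psi>\<in>ext_dom D Vs. Im (cinner \<psi> (ext_op D S Vs L \<psi>))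
                \<ge> - ((opnorm_on Vs L)\<^sup>2 / (4 * \<epsilon>)) * (norm \<psi>)\<^sup>2)
          \<and> (\<forall>V'. bounded_op V' \<and> op_ge V' ((opnorm_on Vs L)\<^sup>2 / (4 * \<epsilon>)) \<longrightarrow>
               (\<forall>\<psi>\<in>ext_dom D Vs. Im (cinner \<psi> (ext_op D S Vs L \<psi> + \<i> *\<^sub>C V' \<psi>)) \<ge> 0)))"
proof -
  have cl: "closure D = UNIV" using S_sym unfolding symmetric_op_def densely_defined_def by blast
  have dom: "\<And>\<psi>. \<psi> \<in> ext_dom D Vs \<Longrightarrow> \<exists>f v. f \<in> D \<and> v \<in> Vs \<and> \<psi> = f + v"
    unfolding ext_dom_def by blast
  have mem: "\<And>f v. f \<in> D \<Longrightarrow> v \<in> Vs \<Longrightarrow> f + v \<in> ext_dom D Vs"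
    unfolding ext_dom_def by blast
  have D0: "0 \<in> D" and Vs0: "0 \<in> Vs" using S_dom Vs_sub unfolding csubspace_def by auto
  have ext0: "\<And>\<psi>. ext_op D S Vs (\<lambda>_. 0) \<psi> = adj D S \<psi>" by (simp add: ext_op_def)
  have extL: "\<And>f v L. f \<in> D \<Longrightarrow> v \<in> Vs \<Longrightarrow> ext_op D S Vs L (f + v) = adj D S (f + v) + L v"
    unfolding ext_op_def using the_v[OF S_dom Vs_sub Vs_int] by simp
  have Imadj: "\<And>f v. f \<in> D \<Longrightarrow> v \<in> Vs \<Longrightarrow>
      Im (cinner (f + v) (adj D S (f + v))) = Im (cinner v (adj D S v))"
    using Im_adj[OF S_sym] Vs_adj by blast
  have Imadd: "\<And>\<psi> a b. Im (cinner \<psi> (a + b)) = Im (cinner \<psi> a) + Im (cinner \<psi> b)"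
    by (simp add: cinner_add_right)
  have Imi: "\<And>\<psi> y. Im (cinner \<psi> (\<i> *\<^sub>C y)) = Re (cinner \<psi> y)"
    by (simp add: cinner_scaleC_right)
  obtain KV where KV: "\<forall>x. Re (cinner x (V x)) \<le> KV * (norm x)\<^sup>2" using Re_V_le[OF V_bdd] by blast
  have V_add: "\<And>x y. V (x + y) = V x + V y" using V_bdd unfolding bounded_op_def clinear_on_def by blast
  have P1: "symmetric_op (ext_dom D Vs) (ext_op D S Vs (\<lambda>_. 0)) \<longrightarrow>
        (dissipative_op (ext_dom D Vs) (\<lambda>\<psi>. ext_op D S Vs (\<lambda>_. 0) \<psi> + \<i> *\<^sub>C V \<psi>)
         \<and> (\<forall>B. clinear_on (ext_dom D Vs) B
                \<and> (\<forall>f\<in>D. B f = S f + \<i> *\<^sub>C V f)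
                \<and> dissipative_op (ext_dom D Vs) B
                \<longrightarrow> (\<forall>\<psi>\<in>ext_dom D Vs. B \<psi> = ext_op D S Vs (\<lambda>_. 0) \<psi> + \<i> *\<^sub>C V \<psi>)))
        \<and> ((\<exists>v\<in>Vs. L v \<noteq> 0) \<longrightarrow>
             \<not> (\<exists>\<gamma>>0. \<forall>\<psi>\<in>ext_dom D Vs.
                   Im (cinner \<psi> (ext_op D S Vs L \<psi> + \<i> *\<^sub>C V \<psi>)) \<ge> - \<gamma> * (norm \<psi>)\<^sup>2))"
  proof
    assume sym: "symmetric_op (ext_dom D Vs) (ext_op D S Vs (\<lambda>_. 0))"
    have im0: "Im (cinner \<psi> (adj D S \<psi>)) = 0" if "\<psi> \<in> ext_dom D Vs" for \<psi>
    proof -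
      have "cinner (adj D S \<psi>) \<psi> = cinner \<psi> (adj D S \<psi>)"
        using sym that unfolding symmetric_op_def ext0 by blast
      then have "cnj (cinner \<psi> (adj D S \<psi>)) = cinner \<psi> (adj D S \<psi>)" by (metis cinner_commute)
      then have "Im (cnj (cinner \<psi> (adj D S \<psi>))) = Im (cinner \<psi> (adj D S \<psi>))" by simp
      then show ?thesis by simp
    qed
    have A: "dissipative_op (ext_dom D Vs) (\<lambda>\<psi>. ext_op D S Vs (\<lambda>_. 0) \<psi> + \<i> *\<^sub>C V \<psi>)"
      unfolding dissipative_op_def ext0
    proof
      fix \<psi> assume "\<psi> \<in> ext_dom D Vs"
      then show "0 \<le> Im (cinner \<psi> (adj D S \<psi> + \<i> *\<^sub>C V \<psi>))"
        using im0 V_nonneg unfolding op_ge_def by (simp add: Imadd Imi)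
    qed
    have B: "\<forall>B. clinear_on (ext_dom D Vs) B
                \<and> (\<forall>f\<in>D. B f = S f + \<i> *\<^sub>C V f)
                \<and> dissipative_op (ext_dom D Vs) B
                \<longrightarrow> (\<forall>\<psi>\<in>ext_dom D Vs. B \<psi> = ext_op D S Vs (\<lambda>_. 0) \<psi> + \<i> *\<^sub>C V \<psi>)"
    proof (intro allI impI ballI)
      fix B \<psi>
      assume hB: "clinear_on (ext_dom D Vs) B \<and> (\<forall>f\<in>D. B f = S f + \<i> *\<^sub>C V f) \<and> dissipative_op (ext_dom D Vs) B"
        and \<psi>: "\<psi> \<in> ext_dom D Vs"
      obtain f v where fv: "f \<in> D" "v \<in> Vs" "\<psi> = f + v" using dom[OF \<psi>] by blast
      define w where "w = B v - adj D S v - \<i> *\<^sub>C V v"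
      have Beq: "B (f' + v) = adj D S (f' + v) + \<i> *\<^sub>C V (f' + v) + w" if "f' \<in> D" for f'
      proof -
        have "f' \<in> ext_dom D Vs" using mem[OF that Vs0] by simp
        moreover have "v \<in> ext_dom D Vs" using mem[OF D0 fv(2)] by simp
        ultimately have "B (f' + v) = B f' + B v" using hB unfolding clinear_on_def by blast
        also have "\<dots> = S f' + \<i> *\<^sub>C V f' + B v" using hB that by simp
        moreover have "adj D S (f' + v) = S f' + adj D S v"
          using adj_sum[OF S_sym that] Vs_adj fv(2) by blast
        ultimately show ?thesis
          by (simp add: w_def V_add scaleC_add_right algebra_simps)
      qed
      have "\<forall>f'\<in>D. KV * (norm (f' + v))\<^sup>2 + Im (cinner (f' + v) w) \<ge> 0"
      proof
        fix f' assume f': "f' \<in> D"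
        have m: "f' + v \<in> ext_dom D Vs" using mem[OF f' fv(2)] .
        then have "0 \<le> Im (cinner (f' + v) (B (f' + v)))" using hB unfolding dissipative_op_def by blast
        also have "\<dots> = Re (cinner (f' + v) (V (f' + v))) + Im (cinner (f' + v) w)"
          using im0[OF m] by (simp add: Beq[OF f'] Imadd Imi)
        also have "\<dots> \<le> KV * (norm (f' + v))\<^sup>2 + Im (cinner (f' + v) w)" using KV by simp
        finally show "KV * (norm (f' + v))\<^sup>2 + Im (cinner (f' + v) w) \<ge> 0" .
      qed
      then have "w = 0" using dense_w[OF cl] by blast
      then show "B \<psi> = ext_op D S Vs (\<lambda>_. 0) \<psi> + \<i> *\<^sub>C V \<psi>"
        using Beq[OF fv(1)] fv(3) ext0 by simp
    qed
    have C: "(\<exists>v\<in>Vs. L v \<noteq> 0) \<longrightarrow>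
             \<not> (\<exists>\<gamma>>0. \<forall>\<psi>\<in>ext_dom D Vs.
                   Im (cinner \<psi> (ext_op D S Vs L \<psi> + \<i> *\<^sub>C V \<psi>)) \<ge> - \<gamma> * (norm \<psi>)\<^sup>2)"
    proof (intro impI notI)
      assume "\<exists>v\<in>Vs. L v \<noteq> 0"
      then obtain v where v: "v \<in> Vs" "L v \<noteq> 0" by blast
      assume "\<exists>\<gamma>>0. \<forall>\<psi>\<in>ext_dom D Vs. Im (cinner \<psi> (ext_op D S Vs L \<psi> + \<i> *\<^sub>C V \<psi>)) \<ge> - \<gamma> * (norm \<psi>)\<^sup>2"
      then obtain \<gamma> where g: "\<forall>\<psi>\<in>ext_dom D Vs. Im (cinner \<psi> (ext_op D S Vs L \<psi> + \<i> *\<^sub>C V \<psi>)) \<ge> - \<gamma> * (norm \<psi>)\<^sup>2"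
        by blast
      have "\<forall>f\<in>D. (\<gamma> + KV) * (norm (f + v))\<^sup>2 + Im (cinner (f + v) (L v)) \<ge> 0"
      proof
        fix f assume f: "f \<in> D"
        have m: "f + v \<in> ext_dom D Vs" using mem[OF f v(1)] .
        have "- \<gamma> * (norm (f + v))\<^sup>2 \<le> Im (cinner (f + v) (ext_op D S Vs L (f + v) + \<i> *\<^sub>C V (f + v)))"
          using g m by blast
        also have "\<dots> = Im (cinner (f + v) (L v)) + Re (cinner (f + v) (V (f + v)))"
          using im0[OF m] by (simp add: extL[OF f v(1)] Imadd Imi)
        also have "\<dots> \<le> Im (cinner (f + v) (L v)) + KV * (norm (f + v))\<^sup>2" using KV by simp
        finally show "(\<gamma> + KV) * (norm (f + v))\<^sup>2 + Im (cinner (f + v) (L v)) \<ge> 0"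
          by (simp add: algebra_simps)
      qed
      then have "L v = 0" using dense_w[OF cl] by blast
      with v show False by simp
    qed
    show "(dissipative_op (ext_dom D Vs) (\<lambda>\<psi>. ext_op D S Vs (\<lambda>_. 0) \<psi> + \<i> *\<^sub>C V \<psi>)
         \<and> (\<forall>B. clinear_on (ext_dom D Vs) B
                \<and> (\<forall>f\<in>D. B f = S f + \<i> *\<^sub>C V f)
                \<and> dissipative_op (ext_dom D Vs) B
                \<longrightarrow> (\<forall>\<psi>\<in>ext_dom D Vs. B \<psi> = ext_op D S Vs (\<lambda>_. 0) \<psi> + \<i> *\<^sub>C V \<psi>)))
        \<and> ((\<exists>v\<in>Vs. L v \<noteq> 0) \<longrightarrow>
             \<not> (\<exists>\<gamma>>0. \<forall>\<psi>\<in>ext_dom D Vs.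
                   Im (cinner \<psi> (ext_op D S Vs L \<psi> + \<i> *\<^sub>C V \<psi>)) \<ge> - \<gamma> * (norm \<psi>)\<^sup>2))"
      using A B C by blast
  qed
  have P2: "(\<exists>v\<in>Vs. Im (cinner v (ext_op D S Vs (\<lambda>_. 0) v)) < 0) \<longrightarrow>
        (\<forall>L' V'. clinear_on Vs L' \<and> bounded_op V' \<and> op_ge V' 0 \<longrightarrow>
           \<not> dissipative_op (ext_dom D Vs) (\<lambda>\<psi>. ext_op D S Vs L' \<psi> + \<i> *\<^sub>C V' \<psi>))"
  proof (intro impI allI notI)
    fix L' V' :: "'a \<Rightarrow> 'a"
    assume "\<exists>v\<in>Vs. Im (cinner v (ext_op D S Vs (\<lambda>_. 0) v)) < 0"
    then obtain v where v: "v \<in> Vs" "Im (cinner v (adj D S v)) < 0" using ext0 by auto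
    assume hLV: "clinear_on Vs L' \<and> bounded_op V' \<and> op_ge V' 0"
    assume dis: "dissipative_op (ext_dom D Vs) (\<lambda>\<psi>. ext_op D S Vs L' \<psi> + \<i> *\<^sub>C V' \<psi>)"
    obtain K where K: "\<forall>x. Re (cinner x (V' x)) \<le> K * (norm x)\<^sup>2" using Re_V_le hLV by blast
    define c where "c = Im (cinner v (adj D S v))"
    let ?h = "\<lambda>y::'a. c + norm y * norm (L' v) + K * (norm y)\<^sup>2"
    have cont: "continuous_on UNIV ?h"
      by (intro continuous_on_add continuous_on_mult continuous_on_const continuous_on_power
          continuous_on_norm continuous_on_id)
    have "?h 0 < 0" using v(2) by (simp add: c_def)
    then obtain f where f: "f \<in> D" "?h (f + v) < 0" using dense_lemma[OF cl cont, of 0 v] by blast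
    have m: "f + v \<in> ext_dom D Vs" using mem[OF f(1) v(1)] .
    have "0 \<le> Im (cinner (f + v) (ext_op D S Vs L' (f + v) + \<i> *\<^sub>C V' (f + v)))"
      using dis m unfolding dissipative_op_def by blast
    also have "\<dots> = c + Im (cinner (f + v) (L' v)) + Re (cinner (f + v) (V' (f + v)))"
      by (simp add: extL[OF f(1) v(1)] Imadd Imi Imadj[OF f(1) v(1)] c_def)
    also have "\<dots> \<le> ?h (f + v)" using K Im_cinner_le[of "f + v" "L' v"] by (smt (verit))
    finally show False using f(2) by simp
  qed
  have P3: "\<forall>\<epsilon>>0. (\<forall>v\<in>Vs. Im (cinner v (ext_op D S Vs (\<lambda>_. 0) v)) \<ge> \<epsilon> * (norm v)\<^sup>2)
          \<and> (\<exists>K. \<forall>v\<in>Vs. norm (L v) \<le> K * norm v) \<longrightarrow>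
          (\<forall>\<psi>\<in>ext_dom D Vs. Im (cinner \<psi> (ext_op D S Vs L \<psi>))
                \<ge> - ((opnorm_on Vs L)\<^sup>2 / (4 * \<epsilon>)) * (norm \<psi>)\<^sup>2)
          \<and> (\<forall>V'. bounded_op V' \<and> op_ge V' ((opnorm_on Vs L)\<^sup>2 / (4 * \<epsilon>)) \<longrightarrow>
               (\<forall>\<psi>\<in>ext_dom D Vs. Im (cinner \<psi> (ext_op D S Vs L \<psi> + \<i> *\<^sub>C V' \<psi>)) \<ge> 0))"
  proof (intro allI impI)
    fix \<epsilon> :: real
    assume e: "\<epsilon> > 0"
    assume h: "(\<forall>v\<in>Vs. Im (cinner v (ext_op D S Vs (\<lambda>_. 0) v)) \<ge> \<epsilon> * (norm v)\<^sup>2)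
          \<and> (\<exists>K. \<forall>v\<in>Vs. norm (L v) \<le> K * norm v)"
    then obtain K where K: "\<forall>v\<in>Vs. norm (L v) \<le> K * norm v" by blast
    have hv: "\<forall>v\<in>Vs. Im (cinner v (adj D S v)) \<ge> \<epsilon> * (norm v)\<^sup>2" using h ext0 by simp
    define N where "N = opnorm_on Vs L"
    let ?Ks = "{k. k \<ge> 0 \<and> (\<forall>v\<in>Vs. norm (L v) \<le> k * norm v)}"
    have ne: "max K 0 \<in> ?Ks"
    proof -
      have "\<forall>v\<in>Vs. norm (L v) \<le> max K 0 * norm v"
        using K by (metis max.cobounded1 mult_right_mono norm_ge_zero order_trans)
      then show ?thesis by (intro CollectI conjI) auto
    qed
    have N0: "N \<ge> 0" unfolding N_def opnorm_on_def
      by (rule cInf_greatest) (use ne in blast, auto)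
    have LN: "norm (L v) \<le> N * norm v" if v: "v \<in> Vs" for v
    proof (cases "v = 0")
      case True
      have "L (0 + 0) = L 0 + L 0" using L_lin Vs0 unfolding clinear_on_def by blast
      then have "L 0 = 0" by simp
      then show ?thesis using True by simp
    next
      case False
      then have nv: "norm v > 0" by simp
      have "norm (L v) / norm v \<le> N" unfolding N_def opnorm_on_def
      proof (rule cInf_greatest)
        show "?Ks \<noteq> {}" using ne by blast
        fix K' assume "K' \<in> ?Ks"
        then have "norm (L v) \<le> K' * norm v" using v by blast
        then show "norm (L v) / norm v \<le> K'" using nv by (simp add: divide_le_eq)
      qed
      then show ?thesis using nv by (simp add: divide_le_eq)
    qed
    have I1: "\<forall>\<psi>\<in>ext_dom D Vs. Im (cinner \<psi> (ext_op D S Vs L \<psi>)) \<ge> - (N\<^sup>2 / (4 * \<epsilon>)) * (norm \<psi>)\<^sup>2"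
    proof
      fix \<psi> assume \<psi>: "\<psi> \<in> ext_dom D Vs"
      obtain f v where fv: "f \<in> D" "v \<in> Vs" "\<psi> = f + v" using dom[OF \<psi>] by blast
      define a where "a = norm v"
      define b where "b = norm \<psi>"
      have "Im (cinner \<psi> (ext_op D S Vs L \<psi>)) = Im (cinner v (adj D S v)) + Im (cinner \<psi> (L v))"
        using fv by (simp add: extL Imadd Imadj)
      moreover have "Im (cinner v (adj D S v)) \<ge> \<epsilon> * a\<^sup>2" using hv fv(2) a_def by blast
      moreover have "Im (cinner \<psi> (L v)) \<ge> - (b * (N * a))"
      proof -
        have "- (b * (N * a)) \<le> - (norm \<psi> * norm (L v))"
          using LN[OF fv(2)] by (simp add: b_def a_def mult_left_mono)
        then show ?thesis using Im_cinner_ge[of \<psi> "L v"] by linarith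
      qed
      moreover have "\<epsilon> * a\<^sup>2 - b * (N * a) \<ge> - (N\<^sup>2 / (4 * \<epsilon>)) * b\<^sup>2"
      proof -
        have "0 \<le> (2 * \<epsilon> * a - N * b)\<^sup>2" by simp
        then have "0 \<le> 4 * \<epsilon> * (\<epsilon> * a\<^sup>2 - b * (N * a)) + N\<^sup>2 * b\<^sup>2"
          by (simp add: power2_eq_square algebra_simps)
        then have "0 \<le> (\<epsilon> * a\<^sup>2 - b * (N * a)) + N\<^sup>2 * b\<^sup>2 / (4 * \<epsilon>)"
          using e by (simp add: field_simps)
        then show ?thesis by simp
      qed
      ultimately show "Im (cinner \<psi> (ext_op D S Vs L \<psi>)) \<ge> - (N\<^sup>2 / (4 * \<epsilon>)) * (norm \<psi>)\<^sup>2"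
        unfolding b_def by linarith
    qed
    have I2: "\<forall>V'. bounded_op V' \<and> op_ge V' (N\<^sup>2 / (4 * \<epsilon>)) \<longrightarrow>
               (\<forall>\<psi>\<in>ext_dom D Vs. Im (cinner \<psi> (ext_op D S Vs L \<psi> + \<i> *\<^sub>C V' \<psi>)) \<ge> 0)"
    proof (intro allI impI ballI)
      fix V' :: "'a \<Rightarrow> 'a" and \<psi> assume hV: "bounded_op V' \<and> op_ge V' (N\<^sup>2 / (4 * \<epsilon>))" and \<psi>: "\<psi> \<in> ext_dom D Vs"
      have "Re (cinner \<psi> (V' \<psi>)) \<ge> N\<^sup>2 / (4 * \<epsilon>) * (norm \<psi>)\<^sup>2" using hV unfolding op_ge_def by blast
      then show "Im (cinner \<psi> (ext_op D S Vs L \<psi> + \<i> *\<^sub>C V' \<psi>)) \<ge> 0"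
        using I1 \<psi> by (simp add: Imadd Imi) (smt (verit))
    qed
    show "(\<forall>\<psi>\<in>ext_dom D Vs. Im (cinner \<psi> (ext_op D S Vs L \<psi>))
                \<ge> - ((opnorm_on Vs L)\<^sup>2 / (4 * \<epsilon>)) * (norm \<psi>)\<^sup>2)
          \<and> (\<forall>V'. bounded_op V' \<and> op_ge V' ((opnorm_on Vs L)\<^sup>2 / (4 * \<epsilon>)) \<longrightarrow>
               (\<forall>\<psi>\<in>ext_dom D Vs. Im (cinner \<psi> (ext_op D S Vs L \<psi> + \<i> *\<^sub>C V' \<psi>)) \<ge> 0))"
      using I1 I2 unfolding N_def by blast
  qed
  show ?thesis using P1 P2 P3 by blast
qed

end
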